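(* Let $X$ and $Y$ be nonempty boundedly compact metric spaces (all closed balls are compact) with $d_{GH}(X,Y)<\infty$. Then $d^{us}_{GH}(X,Y)=d_{GH}(X,Y)$.
   Context: For a metric space, $|xy|$ denotes distance. A set-valued map $f:X\rightrightarrows Y$ assigns to each $x\in X$ a nonempty $f(x)\subseteq Y$ and is identified with its graph. A correspondence between $X$ and $Y$ is a subset $R\subseteq X\times Y$ whose projections to $X$ and to $Y$ are both surjective, regarded as the set-valued map $x\mapsto R(x)=\{y:(x,y)\in R\}$; $R^{-1}=\{(y,x):(x,y)\in R\}$; $\mathcal R(X,Y)$ is the set of all correspondences. The distortion of a nonempty $\sigma\subseteq X\times Y$ is $\operatorname{dis}\sigma=\sup\{||xx'|-|yy'||:(x,y),(x',y')\in\sigma\}\in[0,\infty]$, and $d_{GH}(X,Y)=\frac12\inf\{\operatorname{dis}R:R\in\mathcal R(X,Y)\}$. A set-valued map $f$ is upper semicontinuous if for every $x$ and every open $U\supseteq f(x)$ there is a neighborhood $V$ of $x$ with $f(x')\subseteq U$ for all $x'\in V$. $\mathcal R_{us}(X,Y)$ is the set of $R\in\mathcal R(X,Y)$ with both $R$ and $R^{-1}$ upper semicontinuous, and $d^{us}_{GH}(X,Y)=\frac12\inf\{\operatorname{dis}R:R\in\mathcal R_{us}(X,Y)\}$. *)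

theory Defs
  imports "HOL-Analysis.Analysis"
begin

text \<open>Metric spaces are modelled as subsets X of a type of class metric_space,
  carrying the restricted metric and the subspace topology.\<close>

definition boundedly_compact :: "'a::metric_space set \<Rightarrow> bool" where
  "boundedly_compact X \<longleftrightarrow> (\<forall>x\<in>X. \<forall>r. compact (cball x r \<inter> X))"

definition correspondences :: "'a set \<Rightarrow> 'b set \<Rightarrow> ('a \<times> 'b) set set" where
  "correspondences X Y = {R. R \<subseteq> X \<times> Y \<and> fst ` R = X \<and> snd ` R = Y}"

text \<open>Upper semicontinuity of a set-valued map f from X to Y given by its graph;
  f(x) = f `` {x}.\<close>
definition usc_setmap :: "'a::metric_space set \<Rightarrow> 'b::metric_space set \<Rightarrow> ('a \<times> 'b) set \<Rightarrow> bool" where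
  "usc_setmap X Y f \<longleftrightarrow>
     (\<forall>x\<in>X. \<forall>U. openin (top_of_set Y) U \<and> f `` {x} \<subseteq> U \<longrightarrow>
        (\<exists>V. open V \<and> x \<in> V \<and> (\<forall>x'\<in>V \<inter> X. f `` {x'} \<subseteq> U)))"

definition us_correspondences :: "'a::metric_space set \<Rightarrow> 'b::metric_space set \<Rightarrow> ('a \<times> 'b) set set" where
  "us_correspondences X Y =
     {R \<in> correspondences X Y. usc_setmap X Y R \<and> usc_setmap Y X (converse R)}"

definition distortion :: "('a::metric_space \<times> 'b::metric_space) set \<Rightarrow> ereal" where
  "distortion \<sigma> = Sup {ereal \<bar>dist x x' - dist y y'\<bar> | x y x' y'. (x, y) \<in> \<sigma> \<and> (x', y') \<in> \<sigma>}"

definition dGH :: "'a::metric_space set \<Rightarrow> 'b::metric_space set \<Rightarrow> ereal" where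
  "dGH X Y = Inf (distortion ` correspondences X Y) / 2"

definition dGH_us :: "'a::metric_space set \<Rightarrow> 'b::metric_space set \<Rightarrow> ereal" where
  "dGH_us X Y = Inf (distortion ` us_correspondences X Y) / 2"

end

theory Submission
  imports Defs
begin

lemma closure_bound:
  fixes R :: "('a::metric_space \<times> 'b::metric_space) set"
  assumes "\<forall>p\<in>R. \<forall>q\<in>R. \<bar>dist (fst p) (fst q) - dist (snd p) (snd q)\<bar> \<le> c"
  shows "\<forall>p\<in>closure R. \<forall>q\<in>closure R. \<bar>dist (fst p) (fst q) - dist (snd p) (snd q)\<bar> \<le> c"
proof -
  let ?g = "\<lambda>z::(('a\<times>'b)\<times>('a\<times>'b)). \<bar>dist (fst (fst z)) (fst (snd z)) - dist (snd (fst z)) (snd (snd z))\<bar>"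
  have cl: "closed {z. ?g z \<le> c}"
    by (intro closed_Collect_le continuous_intros)
  have "R \<times> R \<subseteq> {z. ?g z \<le> c}"
  proof
    fix z assume "z \<in> R \<times> R"
    hence "fst z \<in> R" "snd z \<in> R" by (auto simp: mem_Times_iff)
    hence "?g z \<le> c" using assms by blast
    thus "z \<in> {z. ?g z \<le> c}" by simp
  qed
  hence "closure (R \<times> R) \<subseteq> {z. ?g z \<le> c}" using cl by (rule closure_minimal)
  thus ?thesis by (auto simp: closure_Times)
qed

lemma usc_lemma:
  fixes R :: "('a::metric_space \<times> 'b::metric_space) set"
  assumes sub: "R \<subseteq> X \<times> Y" and fstR: "fst ` R = X"
    and bc: "boundedly_compact Y"
    and bd: "\<And>x y x' y'. (x,y)\<in>R \<Longrightarrow> (x',y')\<in>R \<Longrightarrow> \<bar>dist x x' - dist y y'\<bar> \<le> c"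
    and cl: "\<And>s x y. (\<And>n. s n \<in> R) \<Longrightarrow> s \<longlonglongrightarrow> (x,y) \<Longrightarrow> x\<in>X \<Longrightarrow> y\<in>Y \<Longrightarrow> (x,y)\<in>R"
  shows "usc_setmap X Y R"
  unfolding usc_setmap_def
proof (intro ballI allI impI)
  fix x U assume x: "x\<in>X" and U: "openin (top_of_set Y) U \<and> R``{x} \<subseteq> U"
  show "\<exists>V. open V \<and> x\<in>V \<and> (\<forall>x'\<in>V\<inter>X. R``{x'} \<subseteq> U)"
  proof (rule ccontr)
    assume neg: "\<not> ?thesis"
    have "\<forall>n. \<exists>p. p\<in>R \<and> fst p \<in> ball x (1/Suc n) \<and> snd p \<notin> U"
    proof
      fix n :: nat
      have "\<not> (\<forall>x'\<in>ball x (1/Suc n) \<inter> X. R``{x'} \<subseteq> U)"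
        using neg x by (metis centre_in_ball of_nat_0_less_iff open_ball zero_less_Suc divide_pos_pos zero_less_one)
      then show "\<exists>p. p\<in>R \<and> fst p \<in> ball x (1/Suc n) \<and> snd p \<notin> U" by auto
    qed
    then obtain s where s: "\<And>n. s n\<in>R \<and> fst (s n) \<in> ball x (1/Suc n) \<and> snd (s n) \<notin> U"
      by metis
    from x fstR obtain y0 where y0: "(x,y0) \<in> R" by force
    have y0Y: "y0 \<in> Y" using y0 sub by auto
    have "(\<lambda>n. dist (fst (s n)) x) \<longlonglongrightarrow> 0"
    proof (rule Lim_null_comparison[OF _ LIMSEQ_inverse_real_of_nat])
      show "\<forall>\<^sub>F n in sequentially. norm (dist (fst (s n)) x) \<le> inverse (real (Suc n))"
        by (intro always_eventually allI) (use s in \<open>simp add: dist_commute divide_inverse less_imp_le\<close>)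
    qed
    hence xs: "(\<lambda>n. fst (s n)) \<longlonglongrightarrow> x" using tendsto_dist_iff by blast
    define K where "K = cball y0 (1 + c) \<inter> Y"
    have K: "compact K" using bc y0Y unfolding boundedly_compact_def K_def by auto
    have inK: "\<forall>n. (snd \<circ> s) n \<in> K"
    proof
      fix n
      have 1: "\<bar>dist (fst (s n)) x - dist (snd (s n)) y0\<bar> \<le> c"
        using bd[of "fst (s n)" "snd (s n)" x y0] s[of n] y0 by auto
      have "dist (fst (s n)) x < 1/Suc n" using s[of n] by (simp add: dist_commute)
      also have "\<dots> \<le> 1" by (simp add: divide_le_eq)
      finally have "dist y0 (snd (s n)) \<le> 1 + c" using 1 by (simp add: dist_commute)
      moreover have "snd (s n) \<in> Y" using s[of n] sub by force
      ultimately show "(snd \<circ> s) n \<in> K" by (simp add: K_def)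
    qed
    obtain y r where yK: "y \<in> K" and r: "strict_mono r" and ys: "((snd \<circ> s) \<circ> r) \<longlonglongrightarrow> y"
      using K inK unfolding compact_eq_seq_compact_metric seq_compact_def by metis
    have xs': "(\<lambda>n. fst (s (r n))) \<longlonglongrightarrow> x"
      using LIMSEQ_subseq_LIMSEQ[OF xs r] by (simp add: o_def)
    have "(\<lambda>n. (fst (s (r n)), snd (s (r n)))) \<longlonglongrightarrow> (x, y)"
      using tendsto_Pair[OF xs' ys[unfolded o_def]] by simp
    hence "(\<lambda>n. s (r n)) \<longlonglongrightarrow> (x, y)" by simp
    hence "(x,y) \<in> R" using cl[of "\<lambda>n. s (r n)" x y] s x yK K_def by auto
    hence yU: "y \<in> U" using U by auto
    obtain T where T: "open T" "U = Y \<inter> T" using U openin_open by metis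
    have "\<forall>\<^sub>F n in sequentially. snd (s (r n)) \<in> T"
      using topological_tendstoD[OF ys[unfolded o_def] T(1)] yU T(2) by auto
    then obtain N where "snd (s (r N)) \<in> T" by (auto simp: eventually_sequentially)
    moreover have "snd (s (r N)) \<in> Y" using s[of "r N"] sub by force
    ultimately show False using s[of "r N"] T(2) by auto
  qed
qed

lemma closure_corr:
  fixes R :: "('a::metric_space \<times> 'b::metric_space) set"
  assumes R: "R \<in> correspondences X Y" and bcX: "boundedly_compact X"
    and bcY: "boundedly_compact Y" and fin: "distortion R \<noteq> \<infinity>"
  shows "\<exists>R'\<in>us_correspondences X Y. distortion R' \<le> distortion R"
proof -
  define R' where "R' = closure R \<inter> (X \<times> Y)"
  define c where "c = real_of_ereal (distortion R)"
  have upper: "ereal \<bar>dist x x' - dist y y'\<bar> \<le> distortion R" if "(x,y)\<in>R" "(x',y')\<in>R" for x y x' y'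
    unfolding distortion_def by (rule Sup_upper) (use that in blast)
  have cR: "\<forall>p\<in>R. \<forall>q\<in>R. \<bar>dist (fst p) (fst q) - dist (snd p) (snd q)\<bar> \<le> c"
  proof (intro ballI)
    fix p q assume pq: "p\<in>R" "q\<in>R"
    have u: "ereal \<bar>dist (fst p) (fst q) - dist (snd p) (snd q)\<bar> \<le> distortion R"
      using upper[of "fst p" "snd p" "fst q" "snd q"] pq by simp
    have "distortion R \<noteq> -\<infinity>" using u by auto
    hence "distortion R = ereal c" using fin c_def by (cases "distortion R") auto
    thus "\<bar>dist (fst p) (fst q) - dist (snd p) (snd q)\<bar> \<le> c" using u by simp
  qed
  have cR': "\<forall>p\<in>closure R. \<forall>q\<in>closure R. \<bar>dist (fst p) (fst q) - dist (snd p) (snd q)\<bar> \<le> c"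
    by (rule closure_bound[OF cR])
  have RR': "R \<subseteq> R'" using R closure_subset unfolding R'_def correspondences_def by auto
  have sub: "R' \<subseteq> X \<times> Y" unfolding R'_def by auto
  have fstR': "fst ` R' = X" using RR' sub R unfolding correspondences_def by force
  have sndR': "snd ` R' = Y" using RR' sub R unfolding correspondences_def by force
  have bd: "\<bar>dist x x' - dist y y'\<bar> \<le> c" if "(x,y)\<in>R'" "(x',y')\<in>R'" for x y x' y'
    using cR' that unfolding R'_def by fastforce
  have clo: "(x,y)\<in>R'" if "\<And>n. s n \<in> R'" "s \<longlonglongrightarrow> (x,y)" "x\<in>X" "y\<in>Y" for s x y
  proof -
    have "(x,y) \<in> closure R"
      using closed_sequentially[OF closed_closure[of R], of s "(x,y)"] that unfolding R'_def by auto
    thus ?thesis using that unfolding R'_def by auto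
  qed
  have us1: "usc_setmap X Y R'" by (rule usc_lemma[OF sub fstR' bcY bd clo])
  have us2: "usc_setmap Y X (converse R')"
  proof (rule usc_lemma[where c=c])
    show "converse R' \<subseteq> Y \<times> X" using sub by auto
    show "fst ` converse R' = Y" using sndR' by force
    show "boundedly_compact X" by fact
    show "\<bar>dist y y' - dist x x'\<bar> \<le> c" if "(y,x)\<in>converse R'" "(y',x')\<in>converse R'" for x y x' y'
      using bd[of x y x' y'] that by (simp add: abs_minus_commute)
    show "(y,x)\<in>converse R'" if "\<And>n. s n \<in> converse R'" "s \<longlonglongrightarrow> (y,x)" "y\<in>Y" "x\<in>X" for s x y
    proof -
      have "(\<lambda>n. (snd (s n), fst (s n))) \<longlonglongrightarrow> (x, y)"
        using tendsto_Pair[OF tendsto_snd[OF that(2)] tendsto_fst[OF that(2)]] by simp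
      moreover have "\<And>n. (snd (s n), fst (s n)) \<in> R'" using that(1)
        by (metis converse_iff prod.collapse)
      ultimately have "(x,y) \<in> R'" using clo[of "\<lambda>n. (snd (s n), fst (s n))" x y] that by blast
      thus ?thesis by simp
    qed
  qed
  have "R' \<in> us_correspondences X Y"
    using us1 us2 sub fstR' sndR' unfolding us_correspondences_def correspondences_def by auto
  moreover have "distortion R' \<le> distortion R"
    unfolding distortion_def[of R']
  proof (rule Sup_least)
    fix z assume "z \<in> {ereal \<bar>dist x x' - dist y y'\<bar> | x y x' y'. (x, y) \<in> R' \<and> (x', y') \<in> R'}"
    then obtain x y x' y' where z: "z = ereal \<bar>dist x x' - dist y y'\<bar>" and p: "(x,y)\<in>R'" "(x',y')\<in>R'"
      by blast
    have "R \<noteq> {}" using p unfolding R'_def by auto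
    then obtain a b where ab: "(a,b)\<in>R" by auto
    have "ereal 0 \<le> distortion R" using upper[OF ab ab] by simp
    hence "distortion R = ereal c" using fin c_def by (cases "distortion R") auto
    thus "z \<le> distortion R" using z bd[OF p] by simp
  qed
  ultimately show ?thesis by blast
qed

theorem mainTheorem9:
  fixes X :: "'a::metric_space set" and Y :: "'b::metric_space set"
  assumes "X \<noteq> {}" and "Y \<noteq> {}"
    and "boundedly_compact X" and "boundedly_compact Y"
    and "dGH X Y < \<infinity>"
  shows "dGH_us X Y = dGH X Y"
proof -
  have sub: "us_correspondences X Y \<subseteq> correspondences X Y"
    unfolding us_correspondences_def by auto
  have le1: "Inf (distortion ` correspondences X Y) \<le> Inf (distortion ` us_correspondences X Y)"
    using sub by (intro Inf_superset_mono) auto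
  have le2: "Inf (distortion ` us_correspondences X Y) \<le> Inf (distortion ` correspondences X Y)"
  proof (rule Inf_greatest)
    fix d assume "d \<in> distortion ` correspondences X Y"
    then obtain R where R: "R \<in> correspondences X Y" and d: "d = distortion R" by auto
    show "Inf (distortion ` us_correspondences X Y) \<le> d"
    proof (cases "distortion R = \<infinity>")
      case True thus ?thesis using d by simp
    next
      case False
      then obtain R' where "R'\<in>us_correspondences X Y" "distortion R' \<le> distortion R"
        using closure_corr[OF R assms(3,4)] by blast
      thus ?thesis using d by (meson INF_lower2)
    qed
  qed
  have "Inf (distortion ` us_correspondences X Y) = Inf (distortion ` correspondences X Y)"
    using le1 le2 by (rule antisym[rotated])
  thus ?thesis unfolding dGH_us_def dGH_def by simp
qed

end
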